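(* For every $\epsilon>0$, no impartial selection mechanism (deterministic or randomized, and possibly returning no winner with positive probability) has approximation ratio better than $2-\epsilon$ against all uniform priors; that is, for every such mechanism $f$ there is a uniform prior $\mathbf{P}$ with $\frac{\mathbb{E}_{\mathbf{x}\sim\mathbf{P}}[\Delta(\mathbf{x})]}{\mathbb{E}_{\mathbf{x}\sim\mathbf{P}}[d_{f(\mathbf{x})}(\mathbf{x})]}>2-\epsilon$. (In fact, two-node uniform instances with sufficiently small popularity $p$ suffice.)
   Context: A nomination profile on a finite agent set $N$ is a directed graph $\mathbf{x}$ on $N$ without self-loops; $d_j(\mathbf{x})$ is the in-degree of $j$ and $\Delta(\mathbf{x})=\max_j d_j(\mathbf{x})$. A (randomized) selection mechanism maps each profile to a probability distribution over $N\cup\{\text{no winner}\}$; it is impartial if for every agent $i$, every profile $\mathbf{x}$, and every alternative set $x_i'$ of outgoing edges of $i$, the probability that $i$ is selected is the same at $\mathbf{x}$ and at the profile obtained by replacing $i$'s outgoing edges with $x_i'$. The in-degree of "no winner" is taken as $0$, and $\mathbb{E}[d_{f(\mathbf{x})}(\mathbf{x})]$ is over both the profile and the mechanism's randomness. Uniform prior with popularity $p$: each directed edge $(i,j)$, $i\neq j$, is present independently with probability $p$. *)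

theory Defs
  imports "HOL-Probability.Probability"
begin

definition all_edges :: "nat \<Rightarrow> (nat \<times> nat) set" where
  "all_edges n = {(i, j). i < n \<and> j < n \<and> i \<noteq> j}"

definition profiles :: "nat \<Rightarrow> (nat \<times> nat) set set" where
  "profiles n = Pow (all_edges n)"

definition indeg :: "(nat \<times> nat) set \<Rightarrow> nat \<Rightarrow> nat" where
  "indeg x j = card {i. (i, j) \<in> x}"

definition maxdeg :: "nat \<Rightarrow> (nat \<times> nat) set \<Rightarrow> nat" where
  "maxdeg n x = Max (insert 0 (indeg x ` {..<n}))"

text \<open>Uniform prior with popularity p: each edge present independently with prob. p.\<close>
definition uniform_prob :: "nat \<Rightarrow> real \<Rightarrow> (nat \<times> nat) set \<Rightarrow> real" where
  "uniform_prob n p x = p ^ card x * (1 - p) ^ (card (all_edges n) - card x)"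

text \<open>A (randomized) selection mechanism: for each number of agents n and each profile,
  a distribution over Some i (agent i selected) and None (no winner).\<close>
definition is_mechanism :: "(nat \<Rightarrow> (nat \<times> nat) set \<Rightarrow> nat option pmf) \<Rightarrow> bool" where
  "is_mechanism f \<longleftrightarrow>
     (\<forall>n. \<forall>x\<in>profiles n. set_pmf (f n x) \<subseteq> insert None (Some ` {..<n}))"

definition impartial :: "(nat \<Rightarrow> (nat \<times> nat) set \<Rightarrow> nat option pmf) \<Rightarrow> bool" where
  "impartial f \<longleftrightarrow>
     (\<forall>n. \<forall>i<n. \<forall>x\<in>profiles n. \<forall>S. S \<subseteq> {..<n} - {i} \<longrightarrow>
        pmf (f n x) (Some i) =
        pmf (f n ({e \<in> x. fst e \<noteq> i} \<union> (\<lambda>j. (i, j)) ` S)) (Some i))"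

text \<open>Expected in-degree of the selected agent (no winner has in-degree 0), over the
  mechanism's randomness.\<close>
definition winner_deg :: "(nat \<Rightarrow> (nat \<times> nat) set \<Rightarrow> nat option pmf) \<Rightarrow> nat \<Rightarrow> (nat \<times> nat) set \<Rightarrow> real" where
  "winner_deg f n x = (\<Sum>i<n. pmf (f n x) (Some i) * real (indeg x i))"

definition exp_maxdeg :: "nat \<Rightarrow> real \<Rightarrow> real" where
  "exp_maxdeg n p = (\<Sum>x\<in>profiles n. uniform_prob n p x * real (maxdeg n x))"

definition exp_winner_deg :: "(nat \<Rightarrow> (nat \<times> nat) set \<Rightarrow> nat option pmf) \<Rightarrow> nat \<Rightarrow> real \<Rightarrow> real" where
  "exp_winner_deg f n p = (\<Sum>x\<in>profiles n. uniform_prob n p x * winner_deg f n x)"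

end

theory Submission
  imports Defs
begin

lemma pmf_two_le: "pmf (q::nat option pmf) (Some 0) + pmf q (Some 1) \<le> 1"
proof -
  have "measure_pmf.prob q {Some 0, Some 1} = pmf q (Some 0) + pmf q (Some 1)"
    by (subst measure_pmf.finite_measure_eq_sum_singleton) (auto simp: measure_pmf_single)
  thus ?thesis by (metis measure_pmf.prob_le_1)
qed

lemma ae: "all_edges 2 = {(0,1),(1,0)}" unfolding all_edges_def by auto

lemma pr: "profiles 2 = {{},{(0,1)},{(1,0)},{(0,1),(1,0)}}" unfolding profiles_def ae
  by (auto simp: Pow_insert)

lemma indeg_calc:
  "indeg {} i = 0" "indeg {(0,1)} 0 = 0" "indeg {(0,1)} 1 = 1"
  "indeg {(1,0)} 0 = 1" "indeg {(1,0)} 1 = 0"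
  "indeg {(0,1),(1,0)} 0 = 1" "indeg {(0,1),(1,0)} 1 = 1"
  unfolding indeg_def by auto

lemma maxdeg_calc:
  "maxdeg 2 {} = 0" "maxdeg 2 {(0,1)} = 1" "maxdeg 2 {(1,0)} = 1" "maxdeg 2 {(0,1),(1,0)} = 1"
  unfolding maxdeg_def by (auto simp: lessThan_Suc indeg_def numeral_2_eq_2)

lemma up: "uniform_prob 2 p {} = (1-p)^2" "uniform_prob 2 p {(0,1)} = p*(1-p)"
  "uniform_prob 2 p {(1,0)} = p*(1-p)" "uniform_prob 2 p {(0,1),(1,0)} = p^2"
  unfolding uniform_prob_def ae by (auto simp: power2_eq_square)

lemma sum4: "(\<Sum>x\<in>profiles 2. g x) = g {} + g {(0,1)} + g {(1,0)} + g {(0,1),(1,0)}"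
  unfolding pr by (simp add: insert_commute add.assoc)

theorem mainTheorem19:
  fixes f :: "nat \<Rightarrow> (nat \<times> nat) set \<Rightarrow> nat option pmf" and \<epsilon> :: real
  assumes "\<epsilon> > 0" and "is_mechanism f" and "impartial f"
  shows "\<exists>n p. 0 < p \<and> p \<le> 1 \<and> (2 - \<epsilon>) * exp_winner_deg f n p < exp_maxdeg n p"
proof -
  define p where "p = min (\<epsilon>/2) (1/2)"
  have p0: "0 < p" "p \<le> 1/2" "p < \<epsilon>" using assms(1) by (auto simp: p_def)
  define a where "a = pmf (f 2 {(0,1),(1,0)}) (Some 1)"
  define b where "b = pmf (f 2 {(0,1),(1,0)}) (Some 0)"
  have ab: "a + b \<le> 1" "0 \<le> a" "0 \<le> b" using pmf_two_le[of "f 2 {(0,1),(1,0)}"]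
    by (auto simp: a_def b_def)
  have imp: "\<And>i x S. i < 2 \<Longrightarrow> x \<in> profiles 2 \<Longrightarrow> S \<subseteq> {..<2} - {i} \<Longrightarrow>
        pmf (f 2 x) (Some i) = pmf (f 2 ({e \<in> x. fst e \<noteq> i} \<union> (\<lambda>j. (i, j)) ` S)) (Some i)"
    using assms(3) unfolding impartial_def by blast
  have ia: "pmf (f 2 {(0,1)}) (Some 1) = a"
  proof -
    have "pmf (f 2 {(0,1)}) (Some 1) = pmf (f 2 ({e \<in> {(0,1)}. fst e \<noteq> 1} \<union> (\<lambda>j. (1::nat, j)) ` {0})) (Some 1)"
      by (rule imp) (auto simp: pr)
    also have "{e \<in> {(0::nat,1::nat)}. fst e \<noteq> 1} \<union> (\<lambda>j. (1::nat, j)) ` {0} = {(0,1),(1,0)}" by auto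
    finally show ?thesis by (simp add: a_def)
  qed
  have ib: "pmf (f 2 {(1,0)}) (Some 0) = b"
  proof -
    have "pmf (f 2 {(1,0)}) (Some 0) = pmf (f 2 ({e \<in> {(1,0)}. fst e \<noteq> 0} \<union> (\<lambda>j. (0::nat, j)) ` {1})) (Some 0)"
      by (rule imp) (auto simp: pr)
    also have "{e \<in> {(1::nat,0::nat)}. fst e \<noteq> 0} \<union> (\<lambda>j. (0::nat, j)) ` {1} = {(0,1),(1,0)}" by auto
    finally show ?thesis by (simp add: b_def)
  qed
  have wd: "winner_deg f 2 x = pmf (f 2 x) (Some 0) * real (indeg x 0) + pmf (f 2 x) (Some 1) * real (indeg x 1)" for x
    unfolding winner_deg_def by (simp add: numeral_2_eq_2 lessThan_Suc)
  have W: "exp_winner_deg f 2 p = p * (a + b)"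
    unfolding exp_winner_deg_def sum4 wd up using ia ib
    by (simp add: indeg_def a_def b_def power2_eq_square algebra_simps)
  have M: "exp_maxdeg 2 p = 2*p - p^2"
    unfolding exp_maxdeg_def sum4 up maxdeg_calc by (simp add: power2_eq_square algebra_simps)
  have "(2 - \<epsilon>) * (p * (a + b)) < 2*p - p^2"
  proof (cases "2 - \<epsilon> \<ge> 0")
    case True
    have "(2 - \<epsilon>) * (p * (a + b)) \<le> (2 - \<epsilon>) * p"
      using True ab p0 by (simp add: mult_left_mono)
    also have "\<dots> < 2*p - p^2" using p0 by (simp add: power2_eq_square algebra_simps)
    finally show ?thesis .
  next
    case False
    have "(2 - \<epsilon>) * (p * (a + b)) \<le> 0"
      using False ab p0 by (simp add: mult_nonpos_nonneg)
    also have "0 < 2*p - p^2" using p0 by (simp add: power2_eq_square algebra_simps)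
    finally show ?thesis .
  qed
  thus ?thesis using p0 W M by (intro exI[of _ 2] exI[of _ p]) auto
qed

end
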